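(* Let $M$ and $N$ be weight sequences satisfying $\mu_k\le\nu_k$ for all $k$ and $$\exists C>0\ \forall k\in\mathbb{N}_{>0}:\ \sum_{\ell\ge k}\frac1{\nu_\ell}\le C\frac{k}{\mu_k}.$$ Then there is $C'>0$ such that $\int_1^\infty\frac{\omega_N(tu)}{u^2}du\le C'\omega_M(t)+C'$ for all $t>0$.
   Context: A weight sequence is given by an increasing sequence $1=\mu_0\le\mu_1\le\cdots$ via $M_k=\mu_0\cdots\mu_k$, with $M_k^{1/k}\to\infty$; analogously $\nu\leftrightarrow N$. $\omega_M(t)=\sup_{k\in\mathbb{N}}\log(t^k/M_k)$ for $t>0$. *)

theory Defs
  imports "HOL-Analysis.Analysis"
begin

definition wseq :: "(nat \<Rightarrow> real) \<Rightarrow> nat \<Rightarrow> real" where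
  "wseq \<mu> k = (\<Prod>i\<le>k. \<mu> i)"

definition weight_sequence :: "(nat \<Rightarrow> real) \<Rightarrow> bool" where
  "weight_sequence \<mu> \<longleftrightarrow> \<mu> 0 = 1 \<and> mono \<mu> \<and>
     filterlim (\<lambda>k. wseq \<mu> k powr (1 / real k)) at_top sequentially"

definition omega :: "(nat \<Rightarrow> real) \<Rightarrow> real \<Rightarrow> real" where
  "omega \<mu> t = (SUP k. ln (t ^ k / wseq \<mu> k))"

end

theory Submission imports Defs begin


lemma ws_ge1: "weight_sequence \<mu> \<Longrightarrow> 1 \<le> \<mu> i"
  unfolding weight_sequence_def by (metis le0 monoD)

lemma ws_mono: "weight_sequence \<mu> \<Longrightarrow> i \<le> j \<Longrightarrow> \<mu> i \<le> \<mu> j"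
  unfolding weight_sequence_def by (metis monoD)

lemma wseq_shift: "weight_sequence \<mu> \<Longrightarrow> wseq \<mu> k = (\<Prod>i<k. \<mu> (Suc i))"
  unfolding wseq_def using prod.atMost_shift[of \<mu> k] by (simp add: weight_sequence_def)

lemma ln_wseq:
  assumes "weight_sequence \<mu>" "t > 0"
  shows "ln (t^k / wseq \<mu> k) = (\<Sum>i<k. ln (t / \<mu> (Suc i)))"
proof -
  have pos: "\<mu> i > 0" for i using ws_ge1[OF assms(1)] by (meson less_le_trans zero_less_one)
  have "t^k / wseq \<mu> k = (\<Prod>i<k. t / \<mu> (Suc i))"
    by (simp add: wseq_shift[OF assms(1)] prod_dividef)
  moreover have "ln (\<Prod>i<k. t / \<mu> (Suc i)) = (\<Sum>i<k. ln (t / \<mu> (Suc i)))"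
    by (rule ln_prod) (use pos assms(2) in \<open>auto simp: less_imp_neq[symmetric]\<close>)
  ultimately show ?thesis by simp
qed

lemma ws_unbounded:
  assumes "weight_sequence \<mu>"
  shows "\<exists>i. \<mu> i > B"
proof (rule ccontr)
  assume "\<not> ?thesis"
  hence le: "\<mu> i \<le> B" for i by (simp add: not_less)
  have B1: "1 \<le> B" using le[of 0] ws_ge1[OF assms] by (meson order_trans)
  have "eventually (\<lambda>k. wseq \<mu> k powr (1 / real k) > B) sequentially"
    using assms unfolding weight_sequence_def by (simp add: filterlim_at_top_dense)
  then obtain k where k: "wseq \<mu> k powr (1 / real k) > B" "k \<ge> 1"
    by (metis (no_types, lifting) eventually_sequentially le_refl max.cobounded1 max.cobounded2)
  have "wseq \<mu> k \<le> B ^ k"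
    unfolding wseq_shift[OF assms]
    using prod_mono[of "{..<k}" "\<lambda>i. \<mu> (Suc i)" "\<lambda>_. B"] ws_ge1[OF assms] le
    by (simp add: order_trans[OF zero_le_one])
  moreover have "wseq \<mu> k > 0" unfolding wseq_shift[OF assms]
    using ws_ge1[OF assms] by (meson less_le_trans prod_pos zero_less_one)
  ultimately have "wseq \<mu> k powr (1 / real k) \<le> (B ^ k) powr (1 / real k)"
    by (intro powr_mono2) auto
  also have "\<dots> = B" using B1 k(2)
    by (simp add: powr_realpow[symmetric] powr_powr)
  finally show False using k(1) by simp
qed

lemma partial_lnp:
  fixes y :: "nat \<Rightarrow> real"
  assumes dec: "\<And>i j. i \<le> j \<Longrightarrow> y j \<le> y i" and pos: "\<And>i. y i > 0"
  shows "\<exists>p. (\<Sum>i<k. max 0 (ln (y i))) = (\<Sum>i<p. ln (y i))"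
proof (induction k)
  case 0 then show ?case by (intro exI[of _ 0]) simp
next
  case (Suc k)
  then obtain p where p: "(\<Sum>i<k. max 0 (ln (y i))) = (\<Sum>i<p. ln (y i))" by blast
  show ?case
  proof (cases "y k \<le> 1")
    case True
    then have "max 0 (ln (y k)) = 0" using pos[of k] by simp
    then show ?thesis using p by (intro exI[of _ p]) simp
  next
    case False
    then have gt: "y i > 1" if "i \<le> k" for i using dec[OF that] by simp
    have "max 0 (ln (y i)) = ln (y i)" if "i < Suc k" for i
    proof -
      have "1 < y i" using gt[of i] that by simp
      then show ?thesis using ln_gt_zero[of "y i"] by simp
    qed
    then show ?thesis by (intro exI[of _ "Suc k"] sum.cong) auto
  qed
qed

lemma tail_zero:
  assumes "weight_sequence \<mu>" "t > 0"
  obtains K where "\<And>i. K \<le> i \<Longrightarrow> max 0 (ln (t / \<mu> (Suc i))) = 0"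
proof -
  obtain i0 where i0: "\<mu> i0 > t" using ws_unbounded[OF assms(1)] by blast
  have "max 0 (ln (t / \<mu> (Suc i))) = 0" if "i0 \<le> i" for i
  proof -
    have "\<mu> (Suc i) \<ge> \<mu> i0" using ws_mono[OF assms(1)] that by simp
    then have "t / \<mu> (Suc i) \<le> 1" using i0 assms(2) by simp
    then show ?thesis using assms(2) ws_ge1[OF assms(1), of "Suc i"] by simp
  qed
  then show ?thesis using that by blast
qed

lemma omega_bdd:
  assumes "weight_sequence \<mu>" "t > 0"
  shows "bdd_above (range (\<lambda>k. ln (t^k / wseq \<mu> k)))"
proof -
  obtain K where K: "\<And>i. K \<le> i \<Longrightarrow> max 0 (ln (t / \<mu> (Suc i))) = 0"
    using tail_zero[OF assms] by blast
  let ?g = "\<lambda>i. max 0 (ln (t / \<mu> (Suc i)))"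
  have "ln (t^k / wseq \<mu> k) \<le> (\<Sum>i<K. ?g i)" for k
  proof -
    have "ln (t^k / wseq \<mu> k) = (\<Sum>i<k. ln (t / \<mu> (Suc i)))" by (rule ln_wseq[OF assms])
    also have "\<dots> \<le> (\<Sum>i<k. ?g i)" by (intro sum_mono) simp
    also have "\<dots> \<le> (\<Sum>i<max k K. ?g i)" by (intro sum_mono2) auto
    also have "\<dots> = (\<Sum>i<K. ?g i)"
      by (intro sum.mono_neutral_right) (auto simp: K)
    finally show ?thesis .
  qed
  then show ?thesis by (intro bdd_aboveI2) 
qed

lemma omega_lower:
  assumes "weight_sequence \<mu>" "t > 0"
  shows "ln (t^k / wseq \<mu> k) \<le> omega \<mu> t"
  unfolding omega_def by (rule cSUP_upper[OF _ omega_bdd[OF assms]]) simp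

lemma omega_nonneg:
  assumes "weight_sequence \<mu>" "t > 0"
  shows "0 \<le> omega \<mu> t"
  using omega_lower[OF assms, of 0] assms(1)
  by (simp add: wseq_def weight_sequence_def)

lemma sum_lnp_le_omega:
  assumes "weight_sequence \<mu>" "t > 0"
  shows "(\<Sum>i. ennreal (max 0 (ln (t / \<mu> (Suc i))))) \<le> ennreal (omega \<mu> t)"
proof (rule suminf_le_const[OF summableI])
  fix n
  have pos: "\<mu> i > 0" for i using ws_ge1[OF assms(1)] by (meson less_le_trans zero_less_one)
  have dec: "t / \<mu> (Suc j) \<le> t / \<mu> (Suc i)" if "i \<le> j" for i j
    using ws_mono[OF assms(1), of "Suc i" "Suc j"] that pos assms(2)
    by (intro divide_left_mono) auto
  obtain p where p: "(\<Sum>i<n. max 0 (ln (t / \<mu> (Suc i)))) = (\<Sum>i<p. ln (t / \<mu> (Suc i)))"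
    using partial_lnp[of "\<lambda>i. t / \<mu> (Suc i)" n, OF dec] pos assms(2) by auto
  have "(\<Sum>i<n. ennreal (max 0 (ln (t / \<mu> (Suc i))))) = ennreal (\<Sum>i<n. max 0 (ln (t / \<mu> (Suc i))))"
    by simp
  also have "\<dots> \<le> ennreal (omega \<mu> t)"
    using p ln_wseq[OF assms, of p] omega_lower[OF assms, of p] by (intro ennreal_leI) simp
  finally show "(\<Sum>i<n. ennreal (max 0 (ln (t / \<mu> (Suc i))))) \<le> ennreal (omega \<mu> t)" .
qed



lemma int_lnp:
  fixes x :: real
  assumes x: "x > 0"
  shows "(\<integral>\<^sup>+ u. ennreal (max 0 (ln (x * u)) / u^2) * indicator {1..} u \<partial>lborel)
          \<le> ennreal (max 0 (ln x) + min 1 x)"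
proof -
  define a where "a = max 1 (1/x)"
  have a1: "a \<ge> 1" unfolding a_def by simp
  have eq: "ennreal (max 0 (ln (x * u)) / u^2) * indicator {1..} u
           = ennreal (ln (x * u) / u^2) * indicator {a..} u" for u
  proof (cases "u \<ge> a")
    case True
    then have "u \<ge> 1" "x * u \<ge> 1" using x unfolding a_def by (auto simp: field_simps)
    then show ?thesis using True by (simp add: ln_ge_zero)
  next
    case False
    show ?thesis
    proof (cases "u \<ge> 1")
      case True
      then have "x * u < 1" using False x unfolding a_def by (auto simp: field_simps)
      then have "ln (x * u) \<le> 0" using x True by simp
      then show ?thesis using False by (simp add: max_absorb1)
    next
      case False
      then show ?thesis using a1 by (auto simp: indicator_def)
    qed
  qed
  define F where "F u = - (ln (x * u) + 1) / u" for u
  have lim: "(F \<longlongrightarrow> 0) at_top"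
  proof -
    have "((\<lambda>u. - (ln u / u) - (ln x + 1) * inverse u) \<longlongrightarrow> - 0 - (ln x + 1) * 0) at_top"
      by (intro tendsto_intros ln_x_over_x_tendsto_0 tendsto_inverse_0_at_top filterlim_ident)
    then have "((\<lambda>u. - (ln u / u) - (ln x + 1) * inverse u) \<longlongrightarrow> 0) at_top" by simp
    moreover have "eventually (\<lambda>u. - (ln u / u) - (ln x + 1) * inverse u = F u) at_top"
      using eventually_gt_at_top[of 0] by eventually_elim (use x in \<open>simp add: F_def ln_mult field_simps\<close>)
    ultimately show ?thesis by (rule Lim_transform_eventually)
  qed
  have der: "DERIV F u :> ln (x * u) / u^2" if "a \<le> u" for u
  proof -
    have u: "u > 0" using that a1 by simp
    have "((\<lambda>u. - (ln (x * u) + 1) / u) has_real_derivative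
        ((- (x * 1 / (x * u) + 0)) * u - (- (ln (x * u) + 1)) * 1) / (u * u)) (at u)"
      using u x by (intro derivative_eq_intros) auto
    moreover have "((- (x * 1 / (x * u) + 0)) * u - (- (ln (x * u) + 1)) * 1) / (u * u) = ln (x * u) / u^2"
      using u x by (simp add: field_simps power2_eq_square)
    ultimately show ?thesis unfolding F_def by simp
  qed
  have "(\<integral>\<^sup>+ u. ennreal (max 0 (ln (x * u)) / u^2) * indicator {1..} u \<partial>lborel)
        = (\<integral>\<^sup>+ u. ennreal (ln (x * u) / u^2) * indicator {a..} u \<partial>lborel)"
    by (simp add: eq)
  also have "\<dots> = ennreal (0 - F a)"
  proof (rule nn_integral_FTC_atLeast[OF _ der _ lim])
    show "(\<lambda>u. ln (x * u) / u\<^sup>2) \<in> borel_measurable borel" by measurable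
    fix u assume "a \<le> u"
    then have "x * u \<ge> 1" "u \<ge> 1" using x a1 unfolding a_def by (auto simp: field_simps)
    then show "0 \<le> ln (x * u) / u\<^sup>2" by simp
  qed
  also have "\<dots> \<le> ennreal (max 0 (ln x) + min 1 x)"
  proof (intro ennreal_leI)
    show "0 - F a \<le> max 0 (ln x) + min 1 x"
    proof (cases "x \<ge> 1")
      case True
      then have "a = 1" unfolding a_def by (simp add: divide_le_eq_1)
      then show ?thesis using True by (simp add: F_def)
    next
      case False
      then have "a = 1/x" unfolding a_def using x by (simp add: max_def field_simps)
      then show ?thesis using False x by (simp add: F_def)
    qed
  qed
  finally show ?thesis .
qed



lemma omega_le_sum:
  assumes "weight_sequence \<nu>" "s > 0" "c > 0"
  shows "ennreal (omega \<nu> s / c) \<le> (\<Sum>i. ennreal (max 0 (ln (s / \<nu> (Suc i))) / c))"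
proof (cases "(\<Sum>i. ennreal (max 0 (ln (s / \<nu> (Suc i))) / c)) = top")
  case True then show ?thesis by simp
next
  case False
  let ?g = "\<lambda>i. max 0 (ln (s / \<nu> (Suc i))) / c"
  obtain r where r: "(\<Sum>i. ennreal (?g i)) = ennreal r" "r \<ge> 0"
    using False by (cases "(\<Sum>i. ennreal (?g i))") auto
  have "ln (s^k / wseq \<nu> k) / c \<le> r" for k
  proof -
    have "ln (s^k / wseq \<nu> k) / c = (\<Sum>i<k. ln (s / \<nu> (Suc i)) / c)"
      by (simp add: ln_wseq[OF assms(1,2)] sum_divide_distrib)
    also have "\<dots> \<le> (\<Sum>i<k. ?g i)"
      using assms(3) by (intro sum_mono divide_right_mono) auto
    finally have 1: "ln (s^k / wseq \<nu> k) / c \<le> (\<Sum>i<k. ?g i)" .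
    have "ennreal (\<Sum>i<k. ?g i) = (\<Sum>i<k. ennreal (?g i))"
      using assms(3) by simp
    also have "\<dots> \<le> (\<Sum>i. ennreal (?g i))"
      by (intro sum_le_suminf) auto
    finally have "(\<Sum>i<k. ?g i) \<le> r" using r
      by (simp add: ennreal_le_iff)
    with 1 show ?thesis by simp
  qed
  then have "ln (s^k / wseq \<nu> k) \<le> r * c" for k
    using assms(3) by (simp add: divide_le_eq)
  then have "omega \<nu> s \<le> r * c" unfolding omega_def by (intro cSUP_least) auto
  then have "omega \<nu> s / c \<le> r" using assms(3) by (simp add: divide_le_eq)
  then show ?thesis using r by (simp add: ennreal_leI)
qed

theorem lemma5p7:
  fixes \<mu> \<nu> :: "nat \<Rightarrow> real"
  assumes "weight_sequence \<mu>" and "weight_sequence \<nu>"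
    and "\<And>k. \<mu> k \<le> \<nu> k"
    and "\<exists>C>0. \<forall>k\<ge>1. (\<Sum>l. ennreal (1 / \<nu> (l + k))) \<le> ennreal (C * real k / \<mu> k)"
  shows "\<exists>C'>0. \<forall>t>0.
    (\<integral>\<^sup>+ u \<in> {1..}. ennreal (omega \<nu> (t * u) / u\<^sup>2) \<partial>lborel)
      \<le> ennreal (C' * omega \<mu> t + C')"
proof -
  obtain C where C: "C > 0" "\<And>k. k \<ge> 1 \<Longrightarrow> (\<Sum>l. ennreal (1 / \<nu> (l + k))) \<le> ennreal (C * real k / \<mu> k)"
    using assms(4) by blast
  define D where "D = max C (exp 1)"
  have D: "D \<ge> C" "D \<ge> exp 1" "D > 0" unfolding D_def using C(1) by (auto simp: less_max_iff_disj)
  have lnD: "ln D \<ge> 1" using D by (metis ln_exp ln_le_cancel_iff exp_gt_zero)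
  define C' where "C' = 2 + C * D"
  have C'pos: "C' > 0" unfolding C'_def using C D by (simp add: add_pos_nonneg)
  have mupos: "\<mu> i > 0" for i using ws_ge1[OF assms(1)] by (meson less_le_trans zero_less_one)
  have nupos: "\<nu> i > 0" for i using ws_ge1[OF assms(2)] by (meson less_le_trans zero_less_one)
  show ?thesis
  proof (intro exI[of _ C'] conjI allI impI C'pos)
    fix t :: real assume t: "t > 0"
    let ?x = "\<lambda>i. t / \<nu> (Suc i)"
    have xpos: "?x i > 0" for i using t nupos by simp
    have ex: "\<exists>i. \<mu> (Suc i) > t / D"
    proof -
      obtain i where "\<mu> i > t / D" using ws_unbounded[OF assms(1)] by blast
      moreover have "\<mu> i \<le> \<mu> (Suc i)" using ws_mono[OF assms(1)] by simp
      ultimately show ?thesis by (intro exI[of _ i]) simp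
    qed
    define n where "n = (LEAST i. \<mu> (Suc i) > t / D)"
    have n1: "\<mu> (Suc n) > t / D" unfolding n_def by (rule LeastI_ex[OF ex])
    have n2: "\<mu> (Suc i) \<le> t / D" if "i < n" for i
      using not_less_Least[of i "\<lambda>i. \<mu> (Suc i) > t / D"] that unfolding n_def by simp
    have n_le: "real n \<le> omega \<mu> t"
    proof -
      have "real n = (\<Sum>i<n. 1)" by simp
      also have "\<dots> \<le> (\<Sum>i<n. ln (t / \<mu> (Suc i)))"
      proof (intro sum_mono)
        fix i assume "i \<in> {..<n}"
        then have "\<mu> (Suc i) \<le> t / D" using n2 by simp
        then have "D \<le> t / \<mu> (Suc i)" using mupos[of "Suc i"] D(3) t by (simp add: field_simps)
        then have "ln D \<le> ln (t / \<mu> (Suc i))" using D(3) by simp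
        then show "1 \<le> ln (t / \<mu> (Suc i))" using lnD by simp
      qed
      also have "\<dots> = ln (t^n / wseq \<mu> n)" by (simp add: ln_wseq[OF assms(1) t])
      also have "\<dots> \<le> omega \<mu> t" by (rule omega_lower[OF assms(1) t])
      finally show ?thesis .
    qed
    have om0: "omega \<mu> t \<ge> 0" by (rule omega_nonneg[OF assms(1) t])
    have "(\<integral>\<^sup>+ u \<in> {1..}. ennreal (omega \<nu> (t * u) / u\<^sup>2) \<partial>lborel)
        \<le> (\<integral>\<^sup>+ u. (\<Sum>i. ennreal (max 0 (ln (?x i * u)) / u^2) * indicator {1..} u) \<partial>lborel)"
    proof (intro nn_integral_mono)
      fix u :: real
      show "ennreal (omega \<nu> (t * u) / u\<^sup>2) * indicator {1..} u
            \<le> (\<Sum>i. ennreal (max 0 (ln (?x i * u)) / u^2) * indicator {1..} u)"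
      proof (cases "u \<ge> 1")
        case True
        have "ennreal (omega \<nu> (t * u) / u\<^sup>2) \<le> (\<Sum>i. ennreal (max 0 (ln (t * u / \<nu> (Suc i))) / u\<^sup>2))"
          using True t by (intro omega_le_sum[OF assms(2)]) auto
        then show ?thesis using True by simp
      next
        case False then show ?thesis by simp
      qed
    qed
    also have "\<dots> = (\<Sum>i. (\<integral>\<^sup>+ u. ennreal (max 0 (ln (?x i * u)) / u^2) * indicator {1..} u \<partial>lborel))"
      by (intro nn_integral_suminf) measurable
    also have "\<dots> \<le> (\<Sum>i. ennreal (max 0 (ln (?x i)) + min 1 (?x i)))"
      by (intro suminf_le summableI int_lnp xpos)
    also have "\<dots> = (\<Sum>i. ennreal (max 0 (ln (?x i)))) + (\<Sum>i. ennreal (min 1 (?x i)))"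
      using xpos by (subst suminf_add[OF summableI summableI]) (auto intro!: suminf_cong ennreal_plus simp: less_imp_le)
    also have "\<dots> \<le> ennreal (omega \<mu> t) + (ennreal (real n) + ennreal (C * D * (real n + 1)))"
    proof (intro add_mono)
      have "(\<Sum>i. ennreal (max 0 (ln (?x i)))) \<le> (\<Sum>i. ennreal (max 0 (ln (t / \<mu> (Suc i)))))"
      proof (intro suminf_le summableI ennreal_leI max.mono order_refl)
        fix i
        show "ln (?x i) \<le> ln (t / \<mu> (Suc i))"
          using assms(3)[of "Suc i"] t mupos[of "Suc i"] nupos[of "Suc i"]
          by (simp add: divide_left_mono)
      qed
      also have "\<dots> \<le> ennreal (omega \<mu> t)" by (rule sum_lnp_le_omega[OF assms(1) t])
      finally show "(\<Sum>i. ennreal (max 0 (ln (?x i)))) \<le> ennreal (omega \<mu> t)" .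
      have "(\<Sum>i. ennreal (min 1 (?x i))) = (\<Sum>j. ennreal (min 1 (?x (j + n)))) + (\<Sum>j<n. ennreal (min 1 (?x j)))"
        by (rule suminf_offset[OF summableI])
      also have "\<dots> \<le> ennreal (C * D * (real n + 1)) + ennreal (real n)"
      proof (intro add_mono)
        have "(\<Sum>j<n. ennreal (min 1 (?x j))) \<le> (\<Sum>j<n. ennreal 1)"
          by (intro sum_mono ennreal_leI) simp
        then show "(\<Sum>j<n. ennreal (min 1 (?x j))) \<le> ennreal (real n)" by (simp add: ennreal_of_nat_eq_real_of_nat)
        have "(\<Sum>j. ennreal (min 1 (?x (j + n)))) \<le> (\<Sum>j. ennreal t * ennreal (1 / \<nu> (j + Suc n)))"
        proof (intro suminf_le summableI)
          fix j
          have "ennreal (min 1 (?x (j + n))) \<le> ennreal (t * (1 / \<nu> (j + Suc n)))"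
            by (intro ennreal_leI) simp
          then show "ennreal (min 1 (?x (j + n))) \<le> ennreal t * ennreal (1 / \<nu> (j + Suc n))"
            using t nupos[of "j + Suc n"] by (subst ennreal_mult'[symmetric]) (auto simp: less_imp_le)
        qed
        also have "\<dots> = ennreal t * (\<Sum>j. ennreal (1 / \<nu> (j + Suc n)))" by simp
        also have "\<dots> \<le> ennreal t * ennreal (C * real (Suc n) / \<mu> (Suc n))"
          by (intro mult_left_mono C(2)) auto
        also have "\<dots> = ennreal (t * (C * real (Suc n) / \<mu> (Suc n)))"
          using t by (subst ennreal_mult') (auto simp del: of_nat_Suc)
        also have "\<dots> \<le> ennreal (C * D * (real n + 1))"
        proof (intro ennreal_leI)
          have "t < D * \<mu> (Suc n)" using n1 D(3) by (simp add: field_simps)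
          then have "t / \<mu> (Suc n) \<le> D" using mupos[of "Suc n"] by (simp add: field_simps)
          then have "t / \<mu> (Suc n) * (C * real (Suc n)) \<le> D * (C * real (Suc n))"
            using C(1) by (intro mult_right_mono) auto
          then show "t * (C * real (Suc n) / \<mu> (Suc n)) \<le> C * D * (real n + 1)"
            by (simp add: field_simps)
        qed
        finally show "(\<Sum>j. ennreal (min 1 (?x (j + n)))) \<le> ennreal (C * D * (real n + 1))" .
      qed
      finally show "(\<Sum>i. ennreal (min 1 (?x i))) \<le> ennreal (real n) + ennreal (C * D * (real n + 1))"
        by (simp add: add.commute)
    qed
    also have "\<dots> = ennreal (omega \<mu> t + (real n + C * D * (real n + 1)))"
    proof -
      have h: "0 \<le> C * D * (real n + 1)" using C D by simp
      have "ennreal (real n + C * D * (real n + 1)) = ennreal (real n) + ennreal (C * D * (real n + 1))"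
        using h by (intro ennreal_plus) auto
      moreover have "ennreal (omega \<mu> t + (real n + C * D * (real n + 1)))
          = ennreal (omega \<mu> t) + ennreal (real n + C * D * (real n + 1))"
        using h om0 by (intro ennreal_plus) auto
      ultimately show ?thesis by simp
    qed
    also have "\<dots> \<le> ennreal (C' * omega \<mu> t + C')"
    proof (intro ennreal_leI)
      have "C * D * real n \<le> C * D * omega \<mu> t"
        using n_le C D by (intro mult_left_mono) auto
      then show "omega \<mu> t + (real n + C * D * (real n + 1)) \<le> C' * omega \<mu> t + C'"
        using n_le om0 unfolding C'_def by (simp add: algebra_simps)
    qed
    finally show "(\<integral>\<^sup>+ u \<in> {1..}. ennreal (omega \<nu> (t * u) / u\<^sup>2) \<partial>lborel) \<le> ennreal (C' * omega \<mu> t + C')" .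
  qed
qed

end
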